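(* Let $(G,k,M^*,M)$ be a critical tuple. Then there exists a set $\mathcal{C}$ of directed cycles of $G_M$, each with $w_M(C)\le 0$, such that every $e\in E^+(C^+)$ is contained in some cycle of $\mathcal{C}$, and for every $C\in\mathcal{C}$, $C\cap C^+$ is a single path.
   Context: $R(H)$ is the set of red edges of an edge set $H$. For a perfect matching $M$ of a red/blue edge-colored bipartite graph $G=(A\sqcup B,E)$, $G_M$ is the directed graph on $A\sqcup B$ with edges of $M$ oriented from $A$ to $B$ and other edges from $B$ to $A$, weighted by $w_M(e)=0$ for blue $e$, $-1$ for red $e\in M$, $+1$ for red $e\notin M$; $E^+(H)$ (resp. $E^-(H)$) is the set of red edges of $H$ not in $M$ (resp. in $M$), $w_M(H)=|E^+(H)|-|E^-(H)|$. Cycles are identified with edge sets. For an edge $e$, $M^e$ is a perfect matching containing $e$ with the minimum number of red edges among those containing $e$. A tuple $(G,k,M^*,M)$ is critical if: every edge of $G$ lies in some perfect matching; $|R(M^* )|=k$; $|R(M)|<\frac13k$; every directed cycle $C$ of $G_M$ with $w_M(C)>0$ has $|E^+(C)|>\frac23k$; and $|R(M^e)|<\frac13k$ for every red $e\in M^*\setminus M$. $C^+$ is the unique positive-weight directed cycle of $G_M$ contained in $M\Delta M^*$. *)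

theory Defs
  imports Complex_Main
begin

text \<open>A red/blue edge-coloured simple bipartite graph G = (A \<squnion> B, E): edges are pairs (a,b)
  with a \<in> A, b \<in> B; the set R of red edges is a subset of E, all other edges are blue.\<close>

definition bip_graph :: "'v set \<Rightarrow> 'v set \<Rightarrow> ('v \<times> 'v) set \<Rightarrow> ('v \<times> 'v) set \<Rightarrow> bool" where
  "bip_graph A B E R \<longleftrightarrow> finite A \<and> finite B \<and> A \<inter> B = {} \<and> E \<subseteq> A \<times> B \<and> R \<subseteq> E"

definition perfect_matching :: "'v set \<Rightarrow> 'v set \<Rightarrow> ('v \<times> 'v) set \<Rightarrow> ('v \<times> 'v) set \<Rightarrow> bool" where
  "perfect_matching A B E M \<longleftrightarrow> M \<subseteq> E \<and> (\<forall>a\<in>A. \<exists>!b. (a, b) \<in> M) \<and> (\<forall>b\<in>B. \<exists>!a. (a, b) \<in> M)"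

definition arcM :: "('v \<times> 'v) set \<Rightarrow> ('v \<times> 'v) set \<Rightarrow> 'v \<Rightarrow> 'v \<Rightarrow> bool" where
  "arcM E M u v \<longleftrightarrow> (u, v) \<in> M \<or> ((v, u) \<in> E \<and> (v, u) \<notin> M)"

definition und :: "('v \<times> 'v) set \<Rightarrow> 'v \<Rightarrow> 'v \<Rightarrow> 'v \<times> 'v" where
  "und M u v = (if (u, v) \<in> M then (u, v) else (v, u))"

definition dcycle :: "('v \<times> 'v) set \<Rightarrow> ('v \<times> 'v) set \<Rightarrow> ('v \<times> 'v) set \<Rightarrow> bool" where
  "dcycle E M C \<longleftrightarrow> (\<exists>vs. length vs \<ge> 2 \<and> distinct vs \<and>
     (\<forall>i < length vs. arcM E M (vs ! i) (vs ! ((i + 1) mod length vs))) \<and>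
     C = {und M (vs ! i) (vs ! ((i + 1) mod length vs)) | i. i < length vs})"

definition dpath :: "('v \<times> 'v) set \<Rightarrow> ('v \<times> 'v) set \<Rightarrow> ('v \<times> 'v) set \<Rightarrow> bool" where
  "dpath E M P \<longleftrightarrow> (\<exists>vs. length vs \<ge> 2 \<and> distinct vs \<and>
     (\<forall>i. i + 1 < length vs \<longrightarrow> arcM E M (vs ! i) (vs ! (i + 1))) \<and>
     P = {und M (vs ! i) (vs ! (i + 1)) | i. i + 1 < length vs})"

definition Eplus :: "('v \<times> 'v) set \<Rightarrow> ('v \<times> 'v) set \<Rightarrow> ('v \<times> 'v) set \<Rightarrow> ('v \<times> 'v) set" where
  "Eplus R M H = (H \<inter> R) - M"

definition Eminus :: "('v \<times> 'v) set \<Rightarrow> ('v \<times> 'v) set \<Rightarrow> ('v \<times> 'v) set \<Rightarrow> ('v \<times> 'v) set" where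
  "Eminus R M H = H \<inter> R \<inter> M"

definition wM :: "('v \<times> 'v) set \<Rightarrow> ('v \<times> 'v) set \<Rightarrow> ('v \<times> 'v) set \<Rightarrow> int" where
  "wM R M H = int (card (Eplus R M H)) - int (card (Eminus R M H))"

definition min_red :: "'v set \<Rightarrow> 'v set \<Rightarrow> ('v \<times> 'v) set \<Rightarrow> ('v \<times> 'v) set \<Rightarrow> 'v \<times> 'v \<Rightarrow> nat" where
  "min_red A B E R e = Min {card (M' \<inter> R) | M'. perfect_matching A B E M' \<and> e \<in> M'}"

definition critical :: "'v set \<Rightarrow> 'v set \<Rightarrow> ('v \<times> 'v) set \<Rightarrow> ('v \<times> 'v) set \<Rightarrow> nat
    \<Rightarrow> ('v \<times> 'v) set \<Rightarrow> ('v \<times> 'v) set \<Rightarrow> bool" where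
  "critical A B E R k Mstar M \<longleftrightarrow>
     bip_graph A B E R \<and> perfect_matching A B E Mstar \<and> perfect_matching A B E M \<and>
     (\<forall>e\<in>E. \<exists>M'. perfect_matching A B E M' \<and> e \<in> M') \<and>
     card (Mstar \<inter> R) = k \<and>
     real (card (M \<inter> R)) < real k / 3 \<and>
     (\<forall>C. dcycle E M C \<and> wM R M C > 0 \<longrightarrow> real (card (Eplus R M C)) > 2 * real k / 3) \<and>
     (\<forall>e \<in> (Mstar - M) \<inter> R. real (min_red A B E R e) < real k / 3)"

end

theory Submission
  imports Defs
begin

fun arcs_of :: "'a list \<Rightarrow> ('a \<times> 'a) set" where
  "arcs_of (x # y # zs) = insert (x, y) (arcs_of (y # zs))"
| "arcs_of _ = {}"

lemma arcs_of_nth: "arcs_of xs = {(xs ! i, xs ! Suc i) | i. Suc i < length xs}"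
proof (induction xs rule: arcs_of.induct)
  case (1 x y zs)
  have "{((x # y # zs) ! i, (x # y # zs) ! Suc i) | i. Suc i < length (x # y # zs)}
      = insert (x, y) {((y # zs) ! i, (y # zs) ! Suc i) | i. Suc i < length (y # zs)}"
    (is "?L = ?R")
  proof
    show "?L \<subseteq> ?R"
    proof
      fix z assume "z \<in> ?L"
      then obtain i where z: "z = ((x # y # zs) ! i, (x # y # zs) ! Suc i)" "Suc i < length (x # y # zs)" by blast
      show "z \<in> ?R"
      proof (cases i)
        case 0 then show ?thesis using z by simp
      next
        case (Suc j) then show ?thesis using z by auto
      qed
    qed
  next
    show "?R \<subseteq> ?L"
    proof
      fix z assume "z \<in> ?R"
      then consider "z = (x, y)" | j where "z = ((y # zs) ! j, (y # zs) ! Suc j)" "Suc j < length (y # zs)" by blast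
      then show "z \<in> ?L"
      proof cases
        case 1 then show ?thesis by (auto intro!: exI[of _ 0])
      next
        case 2 then show ?thesis by (auto intro!: exI[of _ "Suc j"])
      qed
    qed
  qed
  then show ?case using 1 by simp
qed auto

lemma arcs_of_Cons: "ys \<noteq> [] \<Longrightarrow> arcs_of (x # ys) = insert (x, hd ys) (arcs_of ys)"
  by (cases ys) auto

lemma arcs_of_append: "arcs_of (xs @ y # zs) = arcs_of (xs @ [y]) \<union> arcs_of (y # zs)"
proof (induction xs)
  case Nil then show ?case by simp
next
  case (Cons a xs)
  show ?case
  proof (cases xs)
    case Nil then show ?thesis by simp
  next
    case (Cons b ys)
    then show ?thesis using Cons.IH by auto
  qed
qed

lemma arcs_of_snoc: "xs \<noteq> [] \<Longrightarrow> arcs_of (xs @ [y]) = insert (last xs, y) (arcs_of xs)"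
proof -
  assume "xs \<noteq> []"
  then have "xs = butlast xs @ [last xs]" by simp
  then have "arcs_of (xs @ [y]) = arcs_of (butlast xs @ last xs # [y])" by (metis append.assoc append_Cons append_Nil)
  also have "\<dots> = arcs_of xs \<union> arcs_of [last xs, y]"
    using arcs_of_append[of "butlast xs" "last xs" "[y]"] \<open>xs = butlast xs @ [last xs]\<close> by simp
  finally show ?thesis by auto
qed

lemma arcs_of_mem: "(u, v) \<in> arcs_of xs \<Longrightarrow> u \<in> set (butlast xs) \<and> v \<in> set (tl xs)"
proof -
  assume "(u, v) \<in> arcs_of xs"
  then obtain i where i: "u = xs ! i" "v = xs ! Suc i" "Suc i < length xs" unfolding arcs_of_nth by blast
  have "u \<in> set (butlast xs)" using i by (simp add: nth_butlast[symmetric] del: nth_butlast)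
  moreover have "v \<in> set (tl xs)" using i by (simp add: nth_tl[symmetric] del: nth_tl)
  ultimately show ?thesis by simp
qed

lemma arcs_of_mem_set: "(u, v) \<in> arcs_of xs \<Longrightarrow> u \<in> set xs \<and> v \<in> set xs"
  using arcs_of_mem[of u v xs] in_set_butlastD[of u xs] list.set_sel(2)[of xs v] by (cases xs) auto

lemma arcs_of_finite: "finite (arcs_of xs)"
  by (induction xs rule: arcs_of.induct) auto

lemma arcs_of_append_sup: "arcs_of xs \<union> arcs_of ys \<subseteq> arcs_of (xs @ ys)"
proof (cases ys)
  case Nil then show ?thesis by simp
next
  case (Cons y zs)
  show ?thesis
  proof (cases "xs = []")
    case True then show ?thesis by simp
  next
    case False
    then show ?thesis using Cons arcs_of_append[of xs y zs] arcs_of_snoc[of xs y] by auto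
  qed
qed

lemma arcs_of_sub3: "arcs_of ys \<subseteq> arcs_of (xs @ ys @ zs)"
  using arcs_of_append_sup[of xs "ys @ zs"] arcs_of_append_sup[of ys zs] by auto

lemma arcs_of_take: "arcs_of (take n xs) \<subseteq> arcs_of xs"
  using arcs_of_append_sup[of "take n xs" "drop n xs"] by simp

lemma arcs_of_drop: "arcs_of (drop n xs) \<subseteq> arcs_of xs"
  using arcs_of_append_sup[of "take n xs" "drop n xs"] by simp

lemma arcs_of_cyc_nth:
  assumes "vs \<noteq> []"
  shows "arcs_of (vs @ [hd vs]) = {(vs ! i, vs ! ((i + 1) mod length vs)) | i. i < length vs}"
proof -
  have a: "(vs @ [hd vs]) ! i = vs ! i" if "i < length vs" for i using that by (simp add: nth_append)
  have b: "(vs @ [hd vs]) ! Suc i = vs ! ((i + 1) mod length vs)" if "i < length vs" for i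
  proof (cases "Suc i < length vs")
    case True then show ?thesis by (simp add: nth_append)
  next
    case False
    then have "Suc i = length vs" using that by simp
    then show ?thesis using assms by (simp add: nth_append hd_conv_nth)
  qed
  show ?thesis unfolding arcs_of_nth
  proof (intro equalityI subsetI)
    fix z assume "z \<in> {((vs @ [hd vs]) ! i, (vs @ [hd vs]) ! Suc i) |i. Suc i < length (vs @ [hd vs])}"
    then obtain i where "z = ((vs @ [hd vs]) ! i, (vs @ [hd vs]) ! Suc i)" "i < length vs" by auto
    then show "z \<in> {(vs ! i, vs ! ((i + 1) mod length vs)) |i. i < length vs}" using a b by auto
  next
    fix z assume "z \<in> {(vs ! i, vs ! ((i + 1) mod length vs)) |i. i < length vs}"
    then obtain i where "z = (vs ! i, vs ! ((i + 1) mod length vs))" "i < length vs" by auto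
    then show "z \<in> {((vs @ [hd vs]) ! i, (vs @ [hd vs]) ! Suc i) |i. Suc i < length (vs @ [hd vs])}"
      using a b by (auto intro!: exI[of _ i])
  qed
qed

lemma walk_to_path:
  "xs \<noteq> [] \<Longrightarrow> \<exists>ys. distinct ys \<and> ys \<noteq> [] \<and> hd ys = hd xs \<and> last ys = last xs \<and> arcs_of ys \<subseteq> arcs_of xs"
proof (induction "length xs" arbitrary: xs rule: less_induct)
  case less
  show ?case
  proof (cases "distinct xs")
    case True then show ?thesis using less.prems by blast
  next
    case False
    then obtain as y bs cs where xs: "xs = as @ [y] @ bs @ [y] @ cs" using not_distinct_decomp by blast
    let ?ys = "as @ y # cs"
    have len: "length ?ys < length xs" using xs by simp
    have hd: "hd ?ys = hd xs" using xs by (cases as) auto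
    have last: "last ?ys = last xs" using xs by (cases cs) auto
    have "arcs_of ?ys = arcs_of (as @ [y]) \<union> arcs_of (y # cs)" by (rule arcs_of_append)
    moreover have "arcs_of xs = arcs_of (as @ [y]) \<union> arcs_of (y # bs @ y # cs)"
      using xs arcs_of_append[of as y "bs @ y # cs"] by simp
    moreover have "arcs_of (y # cs) \<subseteq> arcs_of (y # bs @ y # cs)"
      using arcs_of_append[of "y # bs" y cs] by auto
    ultimately have sub: "arcs_of ?ys \<subseteq> arcs_of xs" by blast
    have ne: "?ys \<noteq> []" by simp
    obtain zs where zs: "distinct zs \<and> zs \<noteq> [] \<and> hd zs = hd ?ys \<and> last zs = last ?ys \<and> arcs_of zs \<subseteq> arcs_of ?ys"
      using less.hyps[OF len ne] by (elim exE) 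
    show ?thesis using hd last sub zs by (intro exI[of _ zs]) auto
  qed
qed

lemma cyc_succ:
  assumes "distinct g" "g \<noteq> []" "(g ! i, v) \<in> arcs_of (g @ [hd g])" "i < length g"
  shows "v = (g @ [hd g]) ! Suc i"
proof -
  from assms(3) obtain j where j: "g ! i = (g @ [hd g]) ! j" "v = (g @ [hd g]) ! Suc j" "Suc j < length (g @ [hd g])"
    unfolding arcs_of_nth by blast
  then have "j < length g" by simp
  then have "g ! i = g ! j" using j(1) by (simp add: nth_append)
  then have "i = j" using assms(1,4) \<open>j < length g\<close> nth_eq_iff_index_eq by blast
  then show ?thesis using j by simp
qed

lemma cyc_prefix:
  assumes "distinct g" "g \<noteq> []"
  shows "xs \<noteq> [] \<Longrightarrow> distinct xs \<Longrightarrow> hd xs = hd g \<Longrightarrow> arcs_of xs \<subseteq> arcs_of (g @ [hd g])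
    \<Longrightarrow> length xs \<le> length g \<and> xs = take (length xs) g"
proof (induction xs rule: rev_induct)
  case Nil then show ?case by simp
next
  case (snoc v xs)
  show ?case
  proof (cases "xs = []")
    case True
    then show ?thesis using snoc.prems assms by (cases g) auto
  next
    case False
    have sub: "arcs_of xs \<subseteq> arcs_of (g @ [hd g])" using snoc.prems(4) arcs_of_snoc[OF False] by auto
    have IH: "length xs \<le> length g \<and> xs = take (length xs) g"
      using snoc.IH[OF False] snoc.prems(2,3) sub False by simp
    define n where "n = length xs"
    have n0: "n > 0" using False n_def by simp
    have nl: "n - 1 < length g" "n - 1 < n" using conjunct1[OF IH] n0 n_def by linarith+
    have "last xs = xs ! (n - 1)" using False n_def by (simp add: last_conv_nth)
    also have "\<dots> = take n g ! (n - 1)" using IH n_def by simp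
    also have "\<dots> = g ! (n - 1)" using nl by simp
    finally have lx: "last xs = g ! (n - 1)" .
    have arc: "(g ! (n - 1), v) \<in> arcs_of (g @ [hd g])" using snoc.prems(4) arcs_of_snoc[OF False] lx by auto
    from nl(1) have v: "v = (g @ [hd g]) ! n" using cyc_succ[OF assms arc] n0 by simp
    show ?thesis
    proof (cases "n < length g")
      case True
      then have "v = g ! n" using v by (simp add: nth_append)
      then show ?thesis using IH True n_def by (simp add: take_Suc_conv_app_nth)
    next
      case False
      then have "n = length g" using IH n_def by simp
      then have "v = hd g" using v by simp
      then have "v = hd xs" using snoc.prems(3) \<open>xs \<noteq> []\<close> by simp
      then have "v \<in> set xs" using \<open>xs \<noteq> []\<close> by simp
      then show ?thesis using snoc.prems(2) by simp
    qed
  qed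
qed

lemma arcs_rotate1:
  assumes "g \<noteq> []"
  shows "arcs_of (rotate1 g @ [hd (rotate1 g)]) = arcs_of (g @ [hd g])"
proof (cases g)
  case Nil then show ?thesis using assms by simp
next
  case (Cons x xs)
  show ?thesis
  proof (cases "xs = []")
    case True then show ?thesis using Cons by simp
  next
    case False
    have "arcs_of (rotate1 g @ [hd (rotate1 g)]) = arcs_of (xs @ x # [hd xs])"
      using Cons False by simp
    also have "\<dots> = arcs_of (xs @ [x]) \<union> arcs_of [x, hd xs]" by (rule arcs_of_append)
    also have "\<dots> = insert (last xs, x) (arcs_of xs) \<union> {(x, hd xs)}" using arcs_of_snoc[OF False] by simp
    finally have 1: "arcs_of (rotate1 g @ [hd (rotate1 g)]) = insert (last xs, x) (arcs_of xs) \<union> {(x, hd xs)}" .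
    have "arcs_of (g @ [hd g]) = insert (x, hd (xs @ [x])) (arcs_of (xs @ [x]))"
      using Cons arcs_of_Cons[of "xs @ [x]" x] by simp
    also have "\<dots> = insert (x, hd xs) (insert (last xs, x) (arcs_of xs))" using arcs_of_snoc[OF False] False by simp
    finally show ?thesis using 1 by auto
  qed
qed

lemma arcs_rotate:
  assumes "g \<noteq> []"
  shows "arcs_of (rotate n g @ [hd (rotate n g)]) = arcs_of (g @ [hd g])"
proof (induction n)
  case 0 then show ?case by simp
next
  case (Suc n)
  have ne: "rotate n g \<noteq> []" using assms by simp
  have "rotate (Suc n) g = rotate1 (rotate n g)" by (simp add: rotate_def)
  then show ?case using arcs_rotate1[OF ne] Suc by simp
qed

lemma rotate_cycle:
  assumes "distinct g" "g \<noteq> []" "h \<in> set g"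
  shows "\<exists>g'. distinct g' \<and> length g' = length g \<and> hd g' = h \<and> set g' = set g \<and>
    arcs_of (g' @ [hd g']) = arcs_of (g @ [hd g])"
proof -
  obtain i where i: "i < length g" "g ! i = h" using assms(3) by (metis in_set_conv_nth)
  let ?g = "rotate i g"
  have "hd ?g = h" using hd_rotate_conv_nth[OF assms(2), of i] i by simp
  then show ?thesis using arcs_rotate[OF assms(2), of i] assms(1) by (intro exI[of _ ?g]) auto
qed

lemma cyc_pred_hd:
  assumes "distinct g" "g \<noteq> []" "(t, hd g) \<in> arcs_of (g @ [hd g])"
  shows "t = last g"
proof -
  from assms(3) obtain j where j: "t = (g @ [hd g]) ! j" "hd g = (g @ [hd g]) ! Suc j" "Suc j < length (g @ [hd g])"
    unfolding arcs_of_nth by blast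
  have "Suc j = length g"
  proof (rule ccontr)
    assume "Suc j \<noteq> length g"
    then have "Suc j < length g" using j(3) by simp
    then have "g ! Suc j = g ! 0" using j(2) assms(2) by (simp add: nth_append hd_conv_nth)
    then show False using assms(1) \<open>Suc j < length g\<close> nth_eq_iff_index_eq by fastforce
  qed
  then have "j = length g - 1" by simp
  then show ?thesis using j(1) assms(2) \<open>Suc j = length g\<close> by (simp add: nth_append last_conv_nth)
qed

definition arcG :: "('v \<times> 'v) set \<Rightarrow> ('v \<times> 'v) set \<Rightarrow> ('v \<times> 'v) set" where
  "arcG E M = {(u, v). arcM E M u v}"

definition undp :: "('v \<times> 'v) set \<Rightarrow> 'v \<times> 'v \<Rightarrow> 'v \<times> 'v" where
  "undp M = (\<lambda>(u, v). und M u v)"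

lemma undp_inj:
  assumes "\<alpha> \<in> arcG E M" "\<beta> \<in> arcG E M" "undp M \<alpha> = undp M \<beta>"
  shows "\<alpha> = \<beta>"
  using assms unfolding arcG_def undp_def arcM_def und_def
  by (cases \<alpha>; cases \<beta>) (auto split: if_splits)

lemma undp_inj_inter:
  assumes "X \<subseteq> arcG E M" "Y \<subseteq> arcG E M"
  shows "undp M ` X \<inter> undp M ` Y = undp M ` (X \<inter> Y)"
  using undp_inj[of _ E M] assms by blast

lemma undp_in_E:
  assumes "M \<subseteq> E" "\<alpha> \<in> arcG E M"
  shows "undp M \<alpha> \<in> E"
  using assms unfolding arcG_def undp_def arcM_def und_def by (cases \<alpha>) auto

lemma image_setcompr: "h ` {f i | i. P i} = {h (f i) | i. P i}"
  by blast

lemma dcycle_iff: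
  "dcycle E M C \<longleftrightarrow> (\<exists>vs. 2 \<le> length vs \<and> distinct vs \<and> arcs_of (vs @ [hd vs]) \<subseteq> arcG E M \<and>
      C = undp M ` arcs_of (vs @ [hd vs]))"
proof -
  have eq: "2 \<le> length vs \<Longrightarrow> arcs_of (vs @ [hd vs]) = {(vs ! i, vs ! ((i + 1) mod length vs)) | i. i < length vs}" for vs :: "'a list"
    by (rule arcs_of_cyc_nth) auto
  show ?thesis unfolding dcycle_def
  proof (intro iffI; elim exE conjE)
    fix vs assume a: "2 \<le> length vs" "distinct vs" "\<forall>i<length vs. arcM E M (vs ! i) (vs ! ((i + 1) mod length vs))"
      "C = {und M (vs ! i) (vs ! ((i + 1) mod length vs)) |i. i < length vs}"
    show "\<exists>vs. 2 \<le> length vs \<and> distinct vs \<and> arcs_of (vs @ [hd vs]) \<subseteq> arcG E M \<and> C = undp M ` arcs_of (vs @ [hd vs])"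
      using a eq[OF a(1)] by (intro exI[of _ vs]) (auto simp: arcG_def undp_def image_setcompr)
  next
    fix vs assume a: "2 \<le> length vs" "distinct vs" "arcs_of (vs @ [hd vs]) \<subseteq> arcG E M" "C = undp M ` arcs_of (vs @ [hd vs])"
    show "\<exists>vs. 2 \<le> length vs \<and> distinct vs \<and> (\<forall>i<length vs. arcM E M (vs ! i) (vs ! ((i + 1) mod length vs))) \<and>
          C = {und M (vs ! i) (vs ! ((i + 1) mod length vs)) |i. i < length vs}"
      using a eq[OF a(1)] by (intro exI[of _ vs]) (auto simp: arcG_def undp_def image_setcompr)
  qed
qed

lemma dpath_if:
  assumes "2 \<le> length vs" "distinct vs" "arcs_of vs \<subseteq> arcG E M" "P = undp M ` arcs_of vs"
  shows "dpath E M P"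
  unfolding dpath_def
  using assms by (intro exI[of _ vs]) (auto simp: arcG_def undp_def arcs_of_nth image_setcompr)

lemma matching_path:
  assumes finA: "finite A" and disj: "A \<inter> B = {}" and EAB: "E \<subseteq> A \<times> B"
    and pmM: "perfect_matching A B E M" and pmN: "perfect_matching A B E N"
    and hN: "(h, t) \<in> N" and hM: "(h, t) \<notin> M"
  shows "\<exists>p. distinct p \<and> p \<noteq> [] \<and> hd p = h \<and> last p = t \<and> arcs_of p \<subseteq> arcG E M \<and>
     undp M ` arcs_of p \<subseteq> M \<union> N"
proof -
  have ME: "M \<subseteq> E" and NE: "N \<subseteq> E" using pmM pmN unfolding perfect_matching_def by auto
  have Mex: "\<forall>a\<in>A. \<exists>!b. (a, b) \<in> M" and Nex: "\<forall>b\<in>B. \<exists>!a. (a, b) \<in> N"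
    and Nex2: "\<forall>a\<in>A. \<exists>!b. (a, b) \<in> N" and Mex2: "\<forall>b\<in>B. \<exists>!a. (a, b) \<in> M"
    using pmM pmN unfolding perfect_matching_def by auto
  have hA: "h \<in> A" and tB: "t \<in> B" using hN NE EAB by auto
  define mt where "mt a = (THE b. (a, b) \<in> M)" for a
  define ns where "ns b = (THE a. (a, b) \<in> N)" for b
  have mt: "(a, mt a) \<in> M" if "a \<in> A" for a
    unfolding mt_def using Mex that by (metis theI')
  have mtB: "mt a \<in> B" if "a \<in> A" for a using mt[OF that] ME EAB by auto
  have ns: "(ns b, b) \<in> N" if "b \<in> B" for b
    unfolding ns_def using Nex that by (metis theI')
  have nsA: "ns b \<in> A" if "b \<in> B" for b using ns[OF that] NE EAB by auto
  have Mua: "b = b'" if "(a, b) \<in> M" "(a, b') \<in> M" for a b b'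
  proof -
    have "a \<in> A" using that(1) ME EAB by auto
    then have "\<exists>!b. (a, b) \<in> M" using Mex by blast
    then show ?thesis using that by blast
  qed
  have Mub: "a = a'" if "(a, b) \<in> M" "(a', b) \<in> M" for a a' b
  proof -
    have "b \<in> B" using that(1) ME EAB by auto
    then have "\<exists>!a. (a, b) \<in> M" using Mex2 by blast
    then show ?thesis using that by blast
  qed
  have Nua: "b = b'" if "(a, b) \<in> N" "(a, b') \<in> N" for a b b'
  proof -
    have "a \<in> A" using that(1) NE EAB by auto
    then have "\<exists>!b. (a, b) \<in> N" using Nex2 by blast
    then show ?thesis using that by blast
  qed
  define f where "f a = ns (mt a)" for a
  have fA: "f a \<in> A" if "a \<in> A" for a using that f_def mtB nsA by simp
  have fN: "(f a, mt a) \<in> N" if "a \<in> A" for a using that f_def ns mtB by simp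
  have finj: "inj_on f A"
  proof (rule inj_onI)
    fix a a' assume a: "a \<in> A" "a' \<in> A" "f a = f a'"
    then have "mt a = mt a'" using fN[OF a(1)] fN[OF a(2)] Nua by metis
    then show "a = a'" using mt[OF a(1)] mt[OF a(2)] Mub by metis
  qed
  have FA: "(f ^^ j) h \<in> A" for j by (induction j) (auto simp: hA fA)
  have injpow: "inj_on (f ^^ j) A" for j
  proof (induction j)
    case 0 then show ?case by simp
  next
    case (Suc j)
    have "(f ^^ j) ` A \<subseteq> A" by (induction j) (auto simp: fA)
    then have "inj_on f ((f ^^ j) ` A)" using finj inj_on_subset by blast
    then have "inj_on (f \<circ> (f ^^ j)) A" using comp_inj_on[OF Suc.IH] by blast
    then show ?case by (simp add: comp_def)
  qed
  have nonfix: "f ((f ^^ j) h) \<noteq> (f ^^ j) h" for j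
  proof (induction j)
    case 0
    show ?case
    proof
      assume "f ((f ^^ 0) h) = (f ^^ 0) h"
      then have "(h, mt h) \<in> N" using fN[OF hA] by simp
      then have "mt h = t" using hN Nua by metis
      then show False using mt[OF hA] hM by simp
    qed
  next
    case (Suc j)
    show ?case
    proof
      assume "f ((f ^^ Suc j) h) = (f ^^ Suc j) h"
      then have "f (f ((f ^^ j) h)) = f ((f ^^ j) h)" by simp
      then have "f ((f ^^ j) h) = (f ^^ j) h" using finj FA fA inj_onD by metis
      then show False using Suc.IH by simp
    qed
  qed
  define AL where "AL = {(a, mt a) | a. a \<in> A} \<union> {(b, a). (a, b) \<in> N \<and> (a, b) \<notin> M}"
  have walk: "\<exists>ws. ws \<noteq> [] \<and> hd ws = h \<and> last ws = mt ((f ^^ j) h) \<and> arcs_of ws \<subseteq> AL" for j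
  proof (induction j)
    case 0
    show ?case using hA by (intro exI[of _ "[h, mt h]"]) (auto simp: AL_def)
  next
    case (Suc j)
    then obtain ws where ws: "ws \<noteq> []" "hd ws = h" "last ws = mt ((f ^^ j) h)" "arcs_of ws \<subseteq> AL" by blast
    let ?a = "(f ^^ j) h"
    let ?x = "f ?a"
    have ar: "arcs_of (ws @ [?x, mt ?x]) = insert (last ws, ?x) (arcs_of ws) \<union> {(?x, mt ?x)}"
      using arcs_of_append[of ws ?x "[mt ?x]"] arcs_of_snoc[OF ws(1), of ?x] by simp
    have "(?x, mt ?a) \<in> N" using fN[OF FA] by simp
    moreover have "(?x, mt ?a) \<notin> M"
    proof
      assume "(?x, mt ?a) \<in> M"
      then have "?x = ?a" using mt[OF FA[of j]] Mub by metis
      then show False using nonfix by simp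
    qed
    ultimately have "(last ws, ?x) \<in> AL" using ws(3) unfolding AL_def by simp
    moreover have "(?x, mt ?x) \<in> AL" unfolding AL_def using fA[OF FA[of j]] by blast
    ultimately show ?case using ws ar by (intro exI[of _ "ws @ [?x, mt ?x]"]) auto
  qed
  define F where "F j = (f ^^ j) h" for j
  have "\<not> inj_on F {..card A}"
  proof
    assume "inj_on F {..card A}"
    then have "card (F ` {..card A}) = card A + 1" by (simp add: card_image)
    moreover have "F ` {..card A} \<subseteq> A" using FA F_def by auto
    moreover have "card (F ` {..card A}) \<le> card A" using card_mono[OF finA] calculation(2) by blast
    ultimately show False by simp
  qed
  then obtain i j where ij: "i \<le> card A" "j \<le> card A" "i \<noteq> j" "F i = F j"
    unfolding inj_on_def by blast
  have "\<exists>n>0. F n = h"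
  proof -
    have key: "F (j' - i') = h" if "i' < j'" "F i' = F j'" for i' j'
    proof -
      have "(f ^^ j') h = (f ^^ (i' + (j' - i'))) h" using that by simp
      also have "\<dots> = (f ^^ i') ((f ^^ (j' - i')) h)" by (simp add: funpow_add)
      finally have "(f ^^ j') h = (f ^^ i') ((f ^^ (j' - i')) h)" .
      then have "(f ^^ i') ((f ^^ (j' - i')) h) = (f ^^ i') h" using that F_def by simp
      from inj_onD[OF injpow[of i'] this FA hA] show ?thesis unfolding F_def .
    qed
    show ?thesis
    proof (cases "i < j")
      case True then show ?thesis using key[OF True ij(4)] by (intro exI[of _ "j - i"]) auto
    next
      case False then have "j < i" using ij(3) by simp
      then show ?thesis using key[OF \<open>j < i\<close> ij(4)[symmetric]] by (intro exI[of _ "i - j"]) auto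
    qed
  qed
  then obtain n where n: "n > 0" "F n = h" by blast
  define j0 where "j0 = n - 1"
  have "Suc j0 = n" using n j0_def by simp
  then have "F n = (f ^^ Suc j0) h" using F_def by simp
  then have "f ((f ^^ j0) h) = h" using n(2) by simp
  then have "(h, mt ((f ^^ j0) h)) \<in> N" using fN[OF FA[of j0]] by simp
  from Nua[OF this hN] have mtt: "mt ((f ^^ j0) h) = t" .
  obtain ws where ws: "ws \<noteq> []" "hd ws = h" "last ws = t" "arcs_of ws \<subseteq> AL" using walk[of j0] mtt by blast
  obtain p where p: "distinct p" "p \<noteq> []" "hd p = h" "last p = t" "arcs_of p \<subseteq> AL"
    using walk_to_path[OF ws(1)] ws by blast
  have ALG: "AL \<subseteq> arcG E M"
    unfolding AL_def arcG_def arcM_def using mt NE by auto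
  have ALM: "undp M ` AL \<subseteq> M \<union> N"
    unfolding AL_def undp_def und_def using mt by (auto split: if_splits)
  show ?thesis using p ALG ALM by (intro exI[of _ p]) blast
qed

lemma split_arcs:
  "\<not> arcs_of p \<subseteq> S \<Longrightarrow> \<exists>p1 x p2. p = p1 @ [x] @ p2 \<and> p2 \<noteq> [] \<and> arcs_of (p1 @ [x]) \<subseteq> S \<and> (x, hd p2) \<notin> S"
proof (induction p rule: arcs_of.induct)
  case (1 u v zs)
  show ?case
  proof (cases "(u, v) \<in> S")
    case False
    then show ?thesis by (intro exI[of _ "[]"] exI[of _ u] exI[of _ "v # zs"]) simp
  next
    case True
    then have "\<not> arcs_of (v # zs) \<subseteq> S" using "1.prems" by simp
    then obtain p1 x p2 where p: "v # zs = p1 @ [x] @ p2" "p2 \<noteq> []" "arcs_of (p1 @ [x]) \<subseteq> S" "(x, hd p2) \<notin> S"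
      using "1.IH" by blast
    have "arcs_of (u # p1 @ [x]) = insert (u, hd (p1 @ [x])) (arcs_of (p1 @ [x]))" by (rule arcs_of_Cons) simp
    moreover have "hd (p1 @ [x]) = v" using p(1) by (cases p1) auto
    ultimately have "arcs_of ((u # p1) @ [x]) \<subseteq> S" using True p(3) by simp
    then show ?thesis using p by (intro exI[of _ "u # p1"] exI[of _ x] exI[of _ p2]) simp
  qed
qed auto

lemma eplus_card:
  assumes "finite (C \<union> G)" "Z \<union> D \<subseteq> C \<union> G" "Z \<inter> D \<subseteq> C \<inter> G"
  shows "card (Eplus R M Z) + card (Eplus R M D) \<le> card (Eplus R M C) + card (Eplus R M G)"
proof -
  have fin: "finite (Eplus R M X)" if "X \<subseteq> C \<union> G" for X
    using assms(1) that unfolding Eplus_def by (meson Diff_subset finite_subset inf.coboundedI1)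
  have "card (Eplus R M Z) + card (Eplus R M D) = card (Eplus R M Z \<union> Eplus R M D) + card (Eplus R M Z \<inter> Eplus R M D)"
    by (rule card_Un_Int) (use fin assms(2) in auto)
  also have "\<dots> \<le> card (Eplus R M C \<union> Eplus R M G) + card (Eplus R M C \<inter> Eplus R M G)"
  proof (rule add_mono)
    show "card (Eplus R M Z \<union> Eplus R M D) \<le> card (Eplus R M C \<union> Eplus R M G)"
      by (rule card_mono) (use fin assms(2) in \<open>auto simp: Eplus_def\<close>)
    show "card (Eplus R M Z \<inter> Eplus R M D) \<le> card (Eplus R M C \<inter> Eplus R M G)"
      by (rule card_mono) (use fin assms(3) in \<open>auto simp: Eplus_def\<close>)
  qed
  also have "\<dots> = card (Eplus R M C) + card (Eplus R M G)"
    by (rule card_Un_Int[symmetric]) (use fin in auto)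
  finally show ?thesis .
qed

lemma main_rec:
  assumes finE: "finite E" and ME: "M \<subseteq> E"
    and g: "distinct g" "2 \<le> length g" "hd g = h" "last g = t"
    and AgG: "arcs_of (g @ [h]) \<subseteq> arcG E M"
    and Gam: "Gam = undp M ` arcs_of (g @ [h])"
    and e: "e = undp M (t, h)"
    and wpos: "wM R M Gam > 0"
    and K1: "\<forall>C. dcycle E M C \<and> wM R M C > 0 \<longrightarrow> real (card (Eplus R M C)) > 2 * real k / 3"
    and K2: "card (Eplus R M Gam) \<le> k"
    and K3: "\<forall>C. dcycle E M C \<and> wM R M C \<le> 0 \<longrightarrow> real (card (Eplus R M C)) < real k / 3"
  shows "distinct p \<Longrightarrow> p \<noteq> [] \<Longrightarrow> hd p = h \<Longrightarrow> last p = t \<Longrightarrow> arcs_of p \<subseteq> arcG E M \<Longrightarrow>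
    wM R M (undp M ` arcs_of (p @ [h])) \<le> 0 \<Longrightarrow>
    \<exists>D. dcycle E M D \<and> wM R M D \<le> 0 \<and> e \<in> D \<and> dpath E M (D \<inter> Gam)"
proof (induction "card (arcs_of p - arcs_of (g @ [h]))" arbitrary: p rule: less_induct)
  case less
  define Ag where "Ag = arcs_of (g @ [h])"
  have gne: "g \<noteq> []" using g(2) by auto
  have hdg: "hd g = h" using g by simp
  have Agg: "Ag = arcs_of (g @ [hd g])" using Ag_def hdg by simp
  have ht: "h \<noteq> t"
  proof
    assume "h = t"
    have "hd g = g ! 0" "last g = g ! (length g - 1)" using gne by (auto simp: hd_conv_nth last_conv_nth)
    then have "g ! 0 = g ! (length g - 1)" using g \<open>h = t\<close> by simp
    moreover have "0 < length g" "length g - 1 < length g" using gne by auto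
    ultimately have "0 = length g - 1" using nth_eq_iff_index_eq[OF g(1)] by blast
    then show False using g(2) by simp
  qed
  have thAg: "(t, h) \<in> Ag" unfolding Ag_def using arcs_of_snoc[OF gne, of h] g by simp
  have AgG': "Ag \<subseteq> arcG E M" using AgG Ag_def by simp
  have setAg: "u \<in> set g" if "(u, v) \<in> Ag" for u v
    using arcs_of_mem[OF that[unfolded Ag_def]] by (simp add: butlast_append)
  have arcs_g: "arcs_of g \<subseteq> Ag" unfolding Ag_def using arcs_of_append_sup[of g "[h]"] by auto
  have finArcs: "finite (arcs_of xs - Ag)" for xs using arcs_of_finite by auto
  have ACeq: "arcs_of (p @ [h]) = insert (t, h) (arcs_of p)" using arcs_of_snoc[OF less.prems(2)] less.prems(4) by simp
  have notsub: "\<not> arcs_of p \<subseteq> Ag"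
  proof
    assume sub: "arcs_of p \<subseteq> Ag"
    have pre: "length p \<le> length g \<and> p = take (length p) g"
      using cyc_prefix[OF g(1) gne less.prems(2) less.prems(1)] less.prems(3) hdg sub Agg by simp
    have "length p = length g"
    proof (rule ccontr)
      assume "length p \<noteq> length g"
      then have lt: "length p < length g" using pre by simp
      have "last p = p ! (length p - 1)" using less.prems(2) by (simp add: last_conv_nth)
      also have "\<dots> = g ! (length p - 1)" using pre less.prems(2)
        by (metis diff_less length_greater_0_conv nth_take zero_less_one)
      finally have "g ! (length p - 1) = g ! (length g - 1)" using less.prems(4) g(4) gne by (simp add: last_conv_nth)
      moreover have "length p - 1 < length g" "length g - 1 < length g" "length p > 0" using lt less.prems(2) by auto
      ultimately have "length p - 1 = length g - 1" using nth_eq_iff_index_eq[OF g(1)] by blast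
      then show False using lt \<open>length p > 0\<close> by linarith
    qed
    then have "p = g" using pre by simp
    then have "undp M ` arcs_of (p @ [h]) = Gam" using Gam by simp
    then show False using less.prems(6) wpos by simp
  qed
  obtain p1 x p2 where sp: "p = p1 @ [x] @ p2" "p2 \<noteq> []" "arcs_of (p1 @ [x]) \<subseteq> Ag" "(x, hd p2) \<notin> Ag"
    using split_arcs[OF notsub] by blast
  define a where "a = length p1"
  have hd1: "hd (p1 @ [x]) = hd g" using sp(1) less.prems(3) hdg by (cases p1) auto
  have dist1: "distinct (p1 @ [x])" using less.prems(1) sp(1) by simp
  have pre1: "length (p1 @ [x]) \<le> length g \<and> p1 @ [x] = take (length (p1 @ [x])) g"
    using cyc_prefix[OF g(1) gne _ dist1 hd1] sp(3) Agg by simp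
  then have pre1': "p1 @ [x] = take (a + 1) g" "a + 1 \<le> length g" using a_def by auto
  have xg: "x = g ! a"
  proof -
    have "x = (p1 @ [x]) ! a" using a_def by simp
    also have "\<dots> = g ! a" using pre1'(1) by (metis less_add_one nth_take)
    finally show ?thesis .
  qed
  have "\<exists>z\<in>set p2. z \<in> set g"
  proof
    show "last p2 \<in> set p2" using sp(2) by simp
    have "last p2 = t" using less.prems(4) sp(1,2) by simp
    then have "last p2 = last g" using g(4) by simp
    then show "last p2 \<in> set g" using last_in_set[OF gne] by simp
  qed
  then obtain q y p3 where sp2: "p2 = q @ y # p3" "y \<in> set g" "\<forall>z\<in>set q. z \<notin> set g"
    using split_list_first_prop[of p2 "\<lambda>z. z \<in> set g"] by blast
  obtain b where b: "b < length g" "g ! b = y" using sp2(2) by (metis in_set_conv_nth)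
  have pfull: "p = p1 @ [x] @ q @ [y] @ p3" using sp sp2 by simp
  have ynot: "y \<notin> set (p1 @ [x])" using less.prems(1) pfull by auto
  have ab: "a < b"
  proof (rule ccontr)
    assume "\<not> a < b"
    then have "b < a + 1" by simp
    then have "g ! b \<in> set (take (a + 1) g)" using b(1) by (metis in_set_conv_nth length_take min_less_iff_conj nth_take)
    then show False using ynot pre1'(1) b(2) by simp
  qed
  define Q where "Q = x # q @ [y]"
  have tk: "take (a + 1) g = p1 @ [x]" using pre1'(1) by simp
  define Gyx where "Gyx = drop b g @ p1 @ [x]"
  define dvs where "dvs = drop b g @ p1 @ [x] @ q"
  have dbne: "drop b g \<noteq> []" using b(1) by simp
  have hd_db: "hd (drop b g) = y" using b by (simp add: hd_drop_conv_nth)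
  have last_db: "last (drop b g) = t" using b(1) g(4) by simp
  have hd_dvs: "hd dvs = y" using dvs_def dbne hd_db by simp
  have take_hd: "p1 @ [x] = h # tl (p1 @ [x])"
    using hd1 hdg by (cases "p1 @ [x]") auto
  have hd_p2: "hd p2 = hd (q @ [y])" using sp2(1) by (cases q) auto
  have arcsGyx: "arcs_of Gyx = arcs_of (drop b g @ [h]) \<union> arcs_of (p1 @ [x])"
  proof -
    have "Gyx = drop b g @ h # tl (p1 @ [x])" unfolding Gyx_def using take_hd by metis
    then show ?thesis using arcs_of_append[of "drop b g" h "tl (p1 @ [x])"] take_hd by metis
  qed
  have adb: "arcs_of (drop b g @ [h]) \<subseteq> Ag"
  proof -
    have "g @ [h] = take b g @ (drop b g @ [h]) @ []" by (metis append_assoc append_take_drop_id append_Nil2)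
    then show ?thesis unfolding Ag_def using arcs_of_sub3[of "drop b g @ [h]" "take b g" "[]"] by metis
  qed
  have atk: "arcs_of (take n g) \<subseteq> Ag" for n using arcs_of_take[of n g] arcs_g by blast
  have GyxAg: "arcs_of Gyx \<subseteq> Ag" unfolding arcsGyx using adb sp(3) by blast
  have thGyx: "(t, h) \<in> arcs_of Gyx" using arcsGyx arcs_of_snoc[OF dbne, of h] last_db by simp
  have arcsQ: "arcs_of Q = insert (x, hd p2) (arcs_of (q @ [y]))"
    unfolding Q_def using arcs_of_Cons[of "q @ [y]" x] hd_p2 by simp
  have QAg: "arcs_of Q \<inter> Ag = {}"
  proof -
    have "\<alpha> \<notin> Ag" if "\<alpha> \<in> arcs_of (q @ [y])" for \<alpha>
    proof
      assume "\<alpha> \<in> Ag"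
      obtain u v where uv: "\<alpha> = (u, v)" by (cases \<alpha>)
      have "u \<in> set q" using arcs_of_mem[of u v "q @ [y]"] that uv by simp
      moreover have "u \<in> set g" using setAg \<open>\<alpha> \<in> Ag\<close> uv by simp
      ultimately show False using sp2(3) by blast
    qed
    then show ?thesis unfolding arcsQ using sp(4) by auto
  qed
  have Qp: "arcs_of Q \<subseteq> arcs_of p"
    unfolding Q_def using pfull arcs_of_sub3[of "x # q @ [y]" p1 p3] by simp
  have AD: "arcs_of (dvs @ [hd dvs]) = arcs_of Gyx \<union> arcs_of Q"
  proof -
    have "dvs @ [hd dvs] = (drop b g @ p1) @ x # (q @ [y])" using hd_dvs dvs_def by simp
    then have "arcs_of (dvs @ [hd dvs]) = arcs_of ((drop b g @ p1) @ [x]) \<union> arcs_of (x # q @ [y])"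
      using arcs_of_append by metis
    then show ?thesis unfolding Gyx_def Q_def by simp
  qed
  define D where "D = undp M ` arcs_of (dvs @ [hd dvs])"
  have pG: "arcs_of p \<subseteq> arcG E M" using less.prems(5) .
  have ADG: "arcs_of (dvs @ [hd dvs]) \<subseteq> arcG E M" unfolding AD using GyxAg AgG' Qp pG by blast
  have setq: "set q \<inter> set g = {}" using sp2(3) by blast
  have dist_dvs: "distinct dvs"
  proof -
    have "distinct q" using less.prems(1) pfull by simp
    moreover have "set (drop b g) \<inter> set (p1 @ [x]) = {}"
      using set_take_disj_set_drop_if_distinct[OF g(1), of "a + 1" b] ab tk by auto
    moreover have "set (drop b g) \<subseteq> set g" by (rule set_drop_subset)
    moreover have "set (p1 @ [x]) \<subseteq> set g" by (metis tk set_take_subset)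
    moreover have "distinct (p1 @ [x])" using dist1 .
    moreover have "distinct (drop b g)" using g(1) by simp
    ultimately show ?thesis unfolding dvs_def using setq by auto
  qed
  have len_dvs: "2 \<le> length dvs"
  proof -
    have "length (drop b g) \<ge> 1" using dbne by (cases "drop b g") auto
    moreover have "length (p1 @ [x]) \<ge> 1" by simp
    ultimately show ?thesis unfolding dvs_def by simp
  qed
  have Dcyc: "dcycle E M D" unfolding dcycle_iff D_def using len_dvs dist_dvs ADG by blast
  have eD: "e \<in> D" unfolding D_def e AD using thGyx by blast
  have DGam: "D \<inter> Gam = undp M ` arcs_of Gyx"
  proof -
    have "D \<inter> Gam = undp M ` (arcs_of (dvs @ [hd dvs]) \<inter> Ag)"
      unfolding D_def Gam Ag_def[symmetric] by (rule undp_inj_inter[OF ADG AgG'])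
    also have "arcs_of (dvs @ [hd dvs]) \<inter> Ag = arcs_of Gyx" unfolding AD using QAg GyxAg by blast
    finally show ?thesis .
  qed
  have Dpath: "dpath E M (D \<inter> Gam)"
  proof (rule dpath_if[OF _ _ _ DGam])
    show "2 \<le> length Gyx" unfolding Gyx_def using dbne by (cases "drop b g") auto
    show "distinct Gyx" using dist_dvs unfolding dvs_def Gyx_def by auto
    show "arcs_of Gyx \<subseteq> arcG E M" using GyxAg AgG' by blast
  qed
  show ?case
  proof (cases "wM R M D \<le> 0")
    case True
    then show ?thesis using Dcyc eD Dpath by blast
  next
    case False
    then have KD: "real (card (Eplus R M D)) > 2 * real k / 3" using K1 Dcyc by simp
    define W where "W = take (b + 1) g @ p3"
    have tb: "take (b + 1) g = take b g @ [y]" using b by (simp add: take_Suc_conv_app_nth)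
    have Wne: "W \<noteq> []" using W_def gne by simp
    have hdW: "hd W = h" using W_def gne hdg by (cases g) auto
    have lastW: "last W = t"
    proof (cases "p3 = []")
      case True
      then have "last p = y" using pfull by simp
      then show ?thesis using True W_def tb less.prems(4) by simp
    next
      case False
      then have "last p = last p3" using pfull by simp
      then show ?thesis using False W_def less.prems(4) by simp
    qed
    have arcsW: "arcs_of W = arcs_of (take (b + 1) g) \<union> arcs_of (y # p3)"
      unfolding W_def tb using arcs_of_append[of "take b g" y p3] by simp
    have yp3: "arcs_of (y # p3) \<subseteq> arcs_of p"
      using pfull arcs_of_sub3[of "y # p3" "p1 @ [x] @ q" "[]"] by simp
    obtain p' where p': "distinct p'" "p' \<noteq> []" "hd p' = h" "last p' = t" "arcs_of p' \<subseteq> arcs_of W"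
      using walk_to_path[OF Wne] hdW lastW by blast
    have p'G: "arcs_of p' \<subseteq> arcG E M" using p'(5)[unfolded arcsW] atk AgG' yp3 pG by blast
    have AZ: "arcs_of (p' @ [h]) = insert (t, h) (arcs_of p')" using arcs_of_snoc[OF p'(2)] p'(4) by simp
    define Z where "Z = undp M ` arcs_of (p' @ [h])"
    define C where "C = undp M ` arcs_of (p @ [h])"
    have len_p': "2 \<le> length p'"
    proof (rule ccontr)
      assume "\<not> 2 \<le> length p'"
      then obtain z where "p' = [z]" using p'(2) by (cases p'; cases "tl p'") auto
      then show False using p'(3,4) ht by simp
    qed
    have AZG: "arcs_of (p' @ [h]) \<subseteq> arcG E M" unfolding AZ using thAg AgG' p'G by blast
    have Zcyc: "dcycle E M Z" unfolding dcycle_iff Z_def using len_p' p'(1,3) AZG by (intro exI[of _ p']) simp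
    have ACG: "arcs_of (p @ [h]) \<subseteq> arcG E M" unfolding ACeq using thAg AgG' pG by blast
    have len_p: "2 \<le> length p"
    proof (rule ccontr)
      assume "\<not> 2 \<le> length p"
      then obtain z where "p = [z]" using less.prems(2) by (cases p; cases "tl p") auto
      then show False using less.prems(3,4) ht by simp
    qed
    have Ccyc: "dcycle E M C" unfolding dcycle_iff C_def using len_p less.prems(1,3) ACG by (intro exI[of _ p]) simp
    have KC: "real (card (Eplus R M C)) < real k / 3" using K3 Ccyc less.prems(6) C_def by simp
    have F1: "arcs_of Q \<inter> arcs_of (y # p3) = {}"
    proof -
      have "\<alpha> \<notin> arcs_of (y # p3)" if "\<alpha> \<in> arcs_of Q" for \<alpha>
      proof
        assume a2: "\<alpha> \<in> arcs_of (y # p3)"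
        obtain u v where uv: "\<alpha> = (u, v)" by (cases \<alpha>)
        have "u \<in> set (butlast Q)" using arcs_of_mem that uv by metis
        then have "u \<in> set (x # q)" unfolding Q_def by (simp add: butlast_append)
        moreover have "u \<in> set (y # p3)" using arcs_of_mem_set a2 uv by metis
        moreover have "set (x # q) \<inter> set (y # p3) = {}" using less.prems(1) pfull by auto
        ultimately show False by blast
      qed
      then show ?thesis by blast
    qed
    have F3: "arcs_of (take (b + 1) g) \<inter> arcs_of (drop b g @ [h]) = {}"
    proof -
      have "\<alpha> \<notin> arcs_of (drop b g @ [h])" if "\<alpha> \<in> arcs_of (take (b + 1) g)" for \<alpha>
      proof
        assume a2: "\<alpha> \<in> arcs_of (drop b g @ [h])"
        obtain u v where uv: "\<alpha> = (u, v)" by (cases \<alpha>)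
        have "u \<in> set (butlast (take (b + 1) g))" using arcs_of_mem that uv by metis
        then have "u \<in> set (take b g)" using tb by simp
        moreover have "u \<in> set (butlast (drop b g @ [h]))" using arcs_of_mem a2 uv by metis
        then have "u \<in> set (drop b g)" by simp
        moreover have "set (take b g) \<inter> set (drop b g) = {}"
          using set_take_disj_set_drop_if_distinct[OF g(1), of b b] by simp
        ultimately show False by blast
      qed
      then show ?thesis by blast
    qed
    have F4: "arcs_of (p1 @ [x]) \<subseteq> arcs_of p"
      using sp(1) arcs_of_append_sup[of "p1 @ [x]" p2] by simp
    have AZsub: "arcs_of (p' @ [h]) \<subseteq> insert (t, h) (arcs_of (take (b + 1) g) \<union> arcs_of (y # p3))"
      unfolding AZ using p'(5)[unfolded arcsW] by blast
    have ADeq: "arcs_of (dvs @ [hd dvs]) = arcs_of (drop b g @ [h]) \<union> arcs_of (p1 @ [x]) \<union> arcs_of Q"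
      unfolding AD arcsGyx by blast
    have Int_sub: "arcs_of (p' @ [h]) \<inter> arcs_of (dvs @ [hd dvs]) \<subseteq> arcs_of (p @ [h]) \<inter> Ag"
    proof
      fix \<alpha> assume "\<alpha> \<in> arcs_of (p' @ [h]) \<inter> arcs_of (dvs @ [hd dvs])"
      then have a1: "\<alpha> \<in> insert (t, h) (arcs_of (take (b + 1) g) \<union> arcs_of (y # p3))"
        and a2': "\<alpha> \<in> arcs_of (dvs @ [hd dvs])"
        using AZsub by blast+
      from a2' have a2: "\<alpha> \<in> arcs_of (drop b g @ [h]) \<union> arcs_of (p1 @ [x]) \<union> arcs_of Q"
        unfolding ADeq .
      show "\<alpha> \<in> arcs_of (p @ [h]) \<inter> Ag"
      proof (cases "\<alpha> = (t, h)")
        case True then show ?thesis using ACeq thAg by simp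
      next
        case False
        then consider "\<alpha> \<in> arcs_of (take (b + 1) g)" | "\<alpha> \<in> arcs_of (y # p3)" using a1 by blast
        then show ?thesis
        proof cases
          case 1
          then have "\<alpha> \<notin> arcs_of (drop b g @ [h])" using F3 by blast
          then have "\<alpha> \<in> arcs_of p" using a2 F4 Qp by blast
          then show ?thesis unfolding ACeq using 1 atk by blast
        next
          case 2
          then have "\<alpha> \<notin> arcs_of Q" using F1 by blast
          then have "\<alpha> \<in> Ag" using a2 adb sp(3) by blast
          then show ?thesis unfolding ACeq using 2 yp3 by blast
        qed
      qed
    qed
    have Un_sub: "arcs_of (p' @ [h]) \<union> arcs_of (dvs @ [hd dvs]) \<subseteq> arcs_of (p @ [h]) \<union> Ag"
      unfolding ADeq ACeq using AZsub thAg atk yp3 adb Qp sp(3) by blast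
    have ZD1: "Z \<inter> D \<subseteq> C \<inter> Gam"
    proof -
      have "Z \<inter> D = undp M ` (arcs_of (p' @ [h]) \<inter> arcs_of (dvs @ [hd dvs]))"
        unfolding Z_def D_def by (rule undp_inj_inter[OF AZG ADG])
      also have "\<dots> \<subseteq> undp M ` (arcs_of (p @ [h]) \<inter> Ag)" using Int_sub by blast
      also have "\<dots> \<subseteq> C \<inter> Gam" unfolding C_def Gam Ag_def by blast
      finally show ?thesis .
    qed
    have ZD2: "Z \<union> D \<subseteq> C \<union> Gam" unfolding Z_def D_def C_def Gam Ag_def[symmetric] using Un_sub by blast
    have finCG: "finite (C \<union> Gam)"
    proof (rule finite_subset[OF _ finE])
      show "C \<union> Gam \<subseteq> E" unfolding C_def Gam using ACG AgG undp_in_E[OF ME] by blast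
    qed
    have cardineq: "card (Eplus R M Z) + card (Eplus R M D) \<le> card (Eplus R M C) + card (Eplus R M Gam)"
      by (rule eplus_card[OF finCG ZD2 ZD1])
    then have "real (card (Eplus R M Z)) + real (card (Eplus R M D)) \<le> real (card (Eplus R M C)) + real (card (Eplus R M Gam))"
      by (metis of_nat_add of_nat_le_iff)
    moreover have "real (card (Eplus R M Gam)) \<le> real k" using K2 by simp
    ultimately have KZ: "real (card (Eplus R M Z)) < 2 * real k / 3" using KD KC by linarith
    have wZ: "wM R M Z \<le> 0"
    proof (rule ccontr)
      assume "\<not> wM R M Z \<le> 0"
      then have "real (card (Eplus R M Z)) > 2 * real k / 3" using K1 Zcyc by simp
      then show False using KZ by simp
    qed
    have xp2: "(x, hd p2) \<in> arcs_of p"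
    proof -
      have "arcs_of (x # p2) \<subseteq> arcs_of p" using sp(1) arcs_of_append_sup[of p1 "x # p2"] by simp
      moreover have "(x, hd p2) \<in> arcs_of (x # p2)" using arcs_of_Cons[OF sp(2)] by simp
      ultimately show ?thesis by blast
    qed
    have xnot: "(x, hd p2) \<notin> arcs_of (y # p3)"
    proof
      assume "(x, hd p2) \<in> arcs_of (y # p3)"
      then have "x \<in> set (y # p3)" using arcs_of_mem_set by metis
      then show False using less.prems(1) pfull by auto
    qed
    have "arcs_of p' - Ag \<subseteq> arcs_of (y # p3) - Ag" using p'(5)[unfolded arcsW] atk by blast
    also have "\<dots> \<subset> arcs_of p - Ag" using yp3 xp2 xnot sp(4) by blast
    finally have "arcs_of p' - Ag \<subset> arcs_of p - Ag" .
    then have lt: "card (arcs_of p' - Ag) < card (arcs_of p - Ag)"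
      by (rule psubset_card_mono[OF finArcs])
    have wZ': "wM R M (undp M ` arcs_of (p' @ [h])) \<le> 0" using wZ Z_def by simp
    show ?thesis using less.hyps[OF lt[unfolded Ag_def] p'(1,2,3,4) p'G wZ'] .
  qed
qed

theorem lemma7:
  fixes A B :: "'v set" and E R Mstar M Cplus :: "('v \<times> 'v) set" and k :: nat
  assumes "critical A B E R k Mstar M"
    and "dcycle E M Cplus" and "Cplus \<subseteq> (M - Mstar) \<union> (Mstar - M)" and "wM R M Cplus > 0"
    and "\<forall>C. dcycle E M C \<and> C \<subseteq> (M - Mstar) \<union> (Mstar - M) \<and> wM R M C > 0 \<longrightarrow> C = Cplus"
  shows "\<exists>\<C>. (\<forall>C\<in>\<C>. dcycle E M C \<and> wM R M C \<le> 0) \<and>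
             (\<forall>e\<in>Eplus R M Cplus. \<exists>C\<in>\<C>. e \<in> C) \<and>
             (\<forall>C\<in>\<C>. dpath E M (C \<inter> Cplus))"
proof -
  note crit = assms(1)[unfolded critical_def bip_graph_def]
  have finA: "finite A" and finB: "finite B" and disj: "A \<inter> B = {}" and EAB: "E \<subseteq> A \<times> B"
    and pmMs: "perfect_matching A B E Mstar" and pmM: "perfect_matching A B E M"
    and kdef: "card (Mstar \<inter> R) = k"
    and K1: "\<forall>C. dcycle E M C \<and> wM R M C > 0 \<longrightarrow> real (card (Eplus R M C)) > 2 * real k / 3"
    and Mred: "real (card (M \<inter> R)) < real k / 3"
    and minred: "\<forall>e \<in> (Mstar - M) \<inter> R. real (min_red A B E R e) < real k / 3"
    using crit by auto
  have finE: "finite E" using finite_subset[OF EAB] finA finB by blast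
  have ME: "M \<subseteq> E" and MsE: "Mstar \<subseteq> E" using pmM pmMs unfolding perfect_matching_def by auto
  have finM: "finite M" using finE ME finite_subset by blast
  have K2: "card (Eplus R M Cplus) \<le> k"
  proof -
    have "Eplus R M Cplus \<subseteq> Mstar \<inter> R" using assms(3) unfolding Eplus_def by blast
    moreover have "finite (Mstar \<inter> R)" using finE MsE finite_subset by blast
    ultimately show ?thesis using card_mono kdef by metis
  qed
  have K3: "\<forall>C. dcycle E M C \<and> wM R M C \<le> 0 \<longrightarrow> real (card (Eplus R M C)) < real k / 3"
  proof (intro allI impI)
    fix C assume a: "dcycle E M C \<and> wM R M C \<le> 0"
    then have "card (Eplus R M C) \<le> card (Eminus R M C)" unfolding wM_def by simp
    also have "\<dots> \<le> card (M \<inter> R)"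
      by (rule card_mono) (use finM in \<open>auto simp: Eminus_def\<close>)
    finally have "real (card (Eplus R M C)) \<le> real (card (M \<inter> R))" by simp
    then show "real (card (Eplus R M C)) < real k / 3" using Mred by linarith
  qed
  obtain g0 where g0: "2 \<le> length g0" "distinct g0" "arcs_of (g0 @ [hd g0]) \<subseteq> arcG E M"
    "Cplus = undp M ` arcs_of (g0 @ [hd g0])"
    using assms(2) unfolding dcycle_iff by blast
  have g0ne: "g0 \<noteq> []" using g0(1) by auto
  have each: "\<exists>D. dcycle E M D \<and> wM R M D \<le> 0 \<and> e \<in> D \<and> dpath E M (D \<inter> Cplus)"
    if eP: "e \<in> Eplus R M Cplus" for e
  proof -
    have eC: "e \<in> Cplus" and eR: "e \<in> R" and eM: "e \<notin> M" using eP unfolding Eplus_def by auto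
    have eMs: "e \<in> Mstar" using eC eM assms(3) by blast
    obtain t h where th: "(t, h) \<in> arcs_of (g0 @ [hd g0])" "e = undp M (t, h)"
      using eC g0(4) by auto
    have "h \<in> set (g0 @ [hd g0])" using arcs_of_mem_set[OF th(1)] by simp
    then have hg0: "h \<in> set g0" using g0ne by auto
    obtain g where g: "distinct g" "length g = length g0" "hd g = h" "set g = set g0"
      "arcs_of (g @ [hd g]) = arcs_of (g0 @ [hd g0])"
      using rotate_cycle[OF g0(2) g0ne hg0] by blast
    have gne: "g \<noteq> []" using g(2) g0ne by auto
    have tlast: "t = last g" using cyc_pred_hd[OF g(1) gne] th(1) g(3,5) by simp
    have arc: "arcM E M t h" using th(1) g0(3) unfolding arcG_def by auto
    have "(t, h) \<notin> M"
    proof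
      assume "(t, h) \<in> M"
      then have "e = (t, h)" using th(2) unfolding undp_def und_def by simp
      then show False using eM \<open>(t, h) \<in> M\<close> by simp
    qed
    then have htE: "(h, t) \<in> E" "(h, t) \<notin> M" and e_eq: "e = (h, t)"
      using arc th(2) unfolding arcM_def undp_def und_def by auto
    have emin: "real (min_red A B E R e) < real k / 3" using minred eMs eM eR by blast
    define S where "S = {card (M' \<inter> R) | M'. perfect_matching A B E M' \<and> e \<in> M'}"
    have Sne: "S \<noteq> {}" unfolding S_def using pmMs eMs by blast
    have Sfin: "finite S"
    proof (rule finite_subset[of _ "{..card E}"])
      show "S \<subseteq> {..card E}"
      proof
        fix n assume "n \<in> S"
        then obtain M' where "n = card (M' \<inter> R)" "perfect_matching A B E M'" unfolding S_def by blast
        then have "M' \<inter> R \<subseteq> E" unfolding perfect_matching_def by blast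
        then show "n \<in> {..card E}" using \<open>n = card (M' \<inter> R)\<close> card_mono[OF finE] by simp
      qed
    qed simp
    have "min_red A B E R e \<in> S" unfolding min_red_def S_def[symmetric] using Min_in[OF Sfin Sne] .
    then obtain N where N: "perfect_matching A B E N" "e \<in> N" "card (N \<inter> R) = min_red A B E R e"
      unfolding S_def by auto
    have hN: "(h, t) \<in> N" using N(2) e_eq by simp
    obtain p where p: "distinct p" "p \<noteq> []" "hd p = h" "last p = t" "arcs_of p \<subseteq> arcG E M"
      "undp M ` arcs_of p \<subseteq> M \<union> N"
      using matching_path[OF finA disj EAB pmM N(1) hN htE(2)] by blast
    have hA: "h \<in> A" and tB: "t \<in> B" using htE(1) EAB by auto
    have ht: "h \<noteq> t" using hA tB disj by auto
    have thG: "(t, h) \<in> arcG E M" using arc unfolding arcG_def by simp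
    have ACeq: "arcs_of (p @ [h]) = insert (t, h) (arcs_of p)" using arcs_of_snoc[OF p(2)] p(4) by simp
    define C where "C = undp M ` arcs_of (p @ [h])"
    have len_p: "2 \<le> length p"
    proof (rule ccontr)
      assume "\<not> 2 \<le> length p"
      then obtain z where "p = [z]" using p(2) by (cases p; cases "tl p") auto
      then show False using p(3,4) ht by simp
    qed
    have ACG: "arcs_of (p @ [h]) \<subseteq> arcG E M" unfolding ACeq using thG p(5) by blast
    have Ccyc: "dcycle E M C" unfolding dcycle_iff C_def using len_p p(1,3) ACG by (intro exI[of _ p]) simp
    have CMN: "C \<subseteq> M \<union> N" unfolding C_def ACeq using p(6) th(2) e_eq N(2) by auto
    have finN: "finite N" using N(1) finE unfolding perfect_matching_def using finite_subset by blast
    have "card (Eplus R M C) \<le> card (N \<inter> R)"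
      by (rule card_mono) (use finN CMN in \<open>auto simp: Eplus_def\<close>)
    then have "real (card (Eplus R M C)) < real k / 3" using N(3) emin by linarith
    then have wC: "wM R M C \<le> 0" using K1 Ccyc by fastforce
    have AgG: "arcs_of (g @ [h]) \<subseteq> arcG E M" using g(3,5) g0(3) by simp
    have Gam: "Cplus = undp M ` arcs_of (g @ [h])" using g(3,5) g0(4) by simp
    have len_g: "2 \<le> length g" using g(2) g0(1) by simp
    show ?thesis
      using main_rec[OF finE ME g(1) len_g g(3) tlast[symmetric] AgG Gam th(2) assms(4) K1 K2 K3
          p(1,2,3,4,5)] wC C_def by blast
  qed
  show ?thesis
    by (rule exI[of _ "{D. dcycle E M D \<and> wM R M D \<le> 0 \<and> dpath E M (D \<inter> Cplus)}"]) (use each in blast)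
qed

end
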